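(* Let $n,m,T$ be positive integers, $\epsilon\ge 0$, and let $x(0),\dots,x(T)\in\mathbb{R}^n$ and $u(0),\dots,u(T-1)\in\mathbb{R}^m$ be given data, with $X_1:=[x(1)\ \cdots\ x(T)]$, $X_0:=[x(0)\ \cdots\ x(T-1)]$, $U_0:=[u(0)\ \cdots\ u(T-1)]$. Consider the two feasibility problems: (E) find symmetric $P\in\mathbb{R}^{n\times n}$, $Y\in\mathbb{R}^{m\times n}$, and scalars $\beta,\alpha$ with $\alpha\ge 0$, $\beta>0$, $P\succ 0$ and $$M(P,Y,\beta)-\alpha\begin{bmatrix} I & X_1\\ 0 & -X_0\\ 0 & -U_0\\ 0 & 0\end{bmatrix}\begin{bmatrix} T\epsilon I & 0\\ 0 & -I\end{bmatrix}\begin{bmatrix} I & X_1\\ 0 & -X_0\\ 0 & -U_0\\ 0 & 0\end{bmatrix}^\top\succeq 0;$$ (I) find symmetric $P\in\mathbb{R}^{n\times n}$, $Y\in\mathbb{R}^{m\times n}$, and scalars $\beta,\tau_0,\dots,\tau_{T-1}$ with $\beta>0$, $\tau_i\ge0$ for all $i$, $P\succ 0$ and $$M(P,Y,\beta)-\sum_{i=0}^{T-1}\tau_i\begin{bmatrix} I & x(i+1)\\ 0 & -x(i)\\ 0 & -u(i)\\ 0 & 0\end{bmatrix}\begin{bmatrix}\epsilon I & 0\\ 0 & -1\end{bmatrix}\begin{bmatrix} I & x(i+1)\\ 0 & -x(i)\\ 0 & -u(i)\\ 0 & 0\end{bmatrix}^\top\succeq 0,$$ where $M(P,Y,\beta):=\begin{bmatrix}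 P-\beta I & 0 & 0 & 0\\ 0 & -P & -Y^\top & 0\\ 0 & -Y & 0 & Y\\ 0 & 0 & Y^\top & P\end{bmatrix}$. If problem (E) is feasible, then problem (I) is feasible.
   Context: $\succ$ ($\succeq$) denote positive definiteness (semidefiniteness). In $M(P,Y,\beta)$ the block rows/columns have sizes $n,n,m,n$; in the $4\times 2$ block matrices the row-block sizes are $n,n,m,n$ and the column-block sizes are $n$ and $T$ (in (E)) or $n$ and $1$ (in (I)); zero and identity blocks have compatible dimensions. *)

theory Defs
  imports "Jordan_Normal_Form.Matrix"
begin

definition psd_mat :: "real mat \<Rightarrow> bool" where
  "psd_mat A \<longleftrightarrow> dim_row A = dim_col A \<and> A\<^sup>T = A \<and>
     (\<forall>v. dim_vec v = dim_row A \<longrightarrow> v \<bullet> (A *\<^sub>v v) \<ge> 0)"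

definition pd_mat :: "real mat \<Rightarrow> bool" where
  "pd_mat A \<longleftrightarrow> dim_row A = dim_col A \<and> A\<^sup>T = A \<and>
     (\<forall>v. dim_vec v = dim_row A \<longrightarrow> v \<noteq> 0\<^sub>v (dim_row A) \<longrightarrow> v \<bullet> (A *\<^sub>v v) > 0)"

definition cols_mat :: "nat \<Rightarrow> nat \<Rightarrow> (nat \<Rightarrow> real vec) \<Rightarrow> real mat" where
  "cols_mat d k f = mat d k (\<lambda>(i,j). f j $ i)"

(* M(P,Y,beta), block sizes n,n,m,n *)
definition M_mat :: "nat \<Rightarrow> nat \<Rightarrow> real mat \<Rightarrow> real mat \<Rightarrow> real \<Rightarrow> real mat" where
  "M_mat n m P Y \<beta> =
     four_block_mat
       (four_block_mat (P - \<beta> \<cdot>\<^sub>m 1\<^sub>m n) (0\<^sub>m n n) (0\<^sub>m n n) (- P))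
       (four_block_mat (0\<^sub>m n m) (0\<^sub>m n n) (- (Y\<^sup>T)) (0\<^sub>m n n))
       (four_block_mat (0\<^sub>m m n) (- Y) (0\<^sub>m n n) (0\<^sub>m n n))
       (four_block_mat (0\<^sub>m m m) Y (Y\<^sup>T) P)"

definition Z_mat :: "nat \<Rightarrow> nat \<Rightarrow> nat \<Rightarrow> real mat \<Rightarrow> real mat \<Rightarrow> real mat \<Rightarrow> real mat" where
  "Z_mat n m k A B C =
     four_block_mat (1\<^sub>m n) A (0\<^sub>m (n + m + n) n) ((- B) @\<^sub>r (- C) @\<^sub>r 0\<^sub>m n k)"

definition W_mat :: "nat \<Rightarrow> nat \<Rightarrow> real \<Rightarrow> real mat" where
  "W_mat n k c = four_block_mat (c \<cdot>\<^sub>m 1\<^sub>m n) (0\<^sub>m n k) (0\<^sub>m k n) (- (1\<^sub>m k))"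

definition msum :: "nat \<Rightarrow> nat \<Rightarrow> (nat \<Rightarrow> real mat) \<Rightarrow> real mat" where
  "msum d T F = foldr (\<lambda>i acc. F i + acc) [0..<T] (0\<^sub>m d d)"

end

theory Submission imports Defs begin

lemma mult_diag_right:
  assumes Z: "Z \<in> carrier_mat N K" and W: "W \<in> carrier_mat K K"
    and off: "\<And>i j. i < K \<Longrightarrow> j < K \<Longrightarrow> i \<noteq> j \<Longrightarrow> W $$ (i,j) = 0"
  shows "Z * W = mat N K (\<lambda>(a,e). Z $$ (a,e) * W $$ (e,e))"
proof (rule eq_matI)
  fix a e assume a: "a < dim_row (mat N K (\<lambda>(a,e). Z $$ (a,e) * W $$ (e,e)))"
    and e: "e < dim_col (mat N K (\<lambda>(a,e). Z $$ (a,e) * W $$ (e,e)))"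
  have "(Z * W) $$ (a,e) = (\<Sum>c\<in>{0..<K}. Z $$ (a,c) * W $$ (c,e))"
    using a e Z W by (simp add: scalar_prod_def)
  also have "\<dots> = (\<Sum>c\<in>{0..<K}. if c = e then Z $$ (a,e) * W $$ (e,e) else 0)"
    by (rule sum.cong) (use off e in auto)
  also have "\<dots> = Z $$ (a,e) * W $$ (e,e)" using e by simp
  finally show "(Z * W) $$ (a,e) = mat N K (\<lambda>(a,e). Z $$ (a,e) * W $$ (e,e)) $$ (a,e)"
    using a e by simp
qed (use Z W in auto)

lemma W_carrier: "W_mat n k c \<in> carrier_mat (n+k) (n+k)"
  unfolding W_mat_def by auto

lemma W_entry: "i < n+k \<Longrightarrow> j < n+k \<Longrightarrow> W_mat n k c $$ (i,j) = (if i = j then (if i < n then c else -1) else 0)"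
  unfolding W_mat_def by auto

lemma Z_carrier: "A \<in> carrier_mat n k \<Longrightarrow> B \<in> carrier_mat n k \<Longrightarrow> C \<in> carrier_mat m k \<Longrightarrow>
   Z_mat n m k A B C \<in> carrier_mat (n+n+m+n) (n+k)"
  unfolding Z_mat_def by (auto simp: append_rows_def)

lemma Z_left: "A \<in> carrier_mat n k \<Longrightarrow> B \<in> carrier_mat n k \<Longrightarrow> C \<in> carrier_mat m k \<Longrightarrow>
   a < n+n+m+n \<Longrightarrow> e < n \<Longrightarrow> Z_mat n m k A B C $$ (a,e) = (if a = e then 1 else 0)"
  unfolding Z_mat_def by (auto simp: append_rows_def)

lemma ZWZ_entry:
  assumes A: "A \<in> carrier_mat n k" and B: "B \<in> carrier_mat n k" and C: "C \<in> carrier_mat m k"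
    and a: "a < n+n+m+n" and b: "b < n+n+m+n"
  shows "(Z_mat n m k A B C * W_mat n k c * (Z_mat n m k A B C)\<^sup>T) $$ (a,b) =
     c * (if a = b \<and> a < n then 1 else 0) -
     (\<Sum>j<k. Z_mat n m k A B C $$ (a,n+j) * Z_mat n m k A B C $$ (b,n+j))"
proof -
  define Z where "Z = Z_mat n m k A B C"
  have Zc: "Z \<in> carrier_mat (n+n+m+n) (n+k)" unfolding Z_def using Z_carrier[OF A B C] .
  have ZW: "Z * W_mat n k c = mat (n+n+m+n) (n+k) (\<lambda>(a,e). Z $$ (a,e) * W_mat n k c $$ (e,e))"
    by (rule mult_diag_right[OF Zc W_carrier]) (simp add: W_entry)
  have "(Z * W_mat n k c * Z\<^sup>T) $$ (a,b) = (\<Sum>e<n+k. Z $$ (a,e) * W_mat n k c $$ (e,e) * Z $$ (b,e))"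
    unfolding ZW using a b Zc by (simp add: scalar_prod_def lessThan_atLeast0)
  also have "\<dots> = (\<Sum>e<n. Z $$ (a,e) * W_mat n k c $$ (e,e) * Z $$ (b,e)) +
      (\<Sum>j<k. Z $$ (a,n+j) * W_mat n k c $$ (n+j,n+j) * Z $$ (b,n+j))"
  proof -
    define f where "f = (\<lambda>e. Z $$ (a,e) * W_mat n k c $$ (e,e) * Z $$ (b,e))"
    have "(\<Sum>e<n+k. f e) = (\<Sum>e<n. f e) + (\<Sum>e=n..<n+k. f e)" unfolding lessThan_atLeast0 by (rule sum.atLeastLessThan_concat[symmetric]) auto
    also have "(\<Sum>e=n..<n+k. f e) = (\<Sum>j<k. f (n+j))"
      using sum.shift_bounds_nat_ivl[of f 0 n k] by (simp add: lessThan_atLeast0 add.commute)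
    finally show ?thesis unfolding f_def .
  qed
  also have "(\<Sum>e<n. Z $$ (a,e) * W_mat n k c $$ (e,e) * Z $$ (b,e)) =
     (\<Sum>e<n. if e = a then (if a = b then c else 0) else 0)"
    by (rule sum.cong) (use a b in \<open>auto simp: Z_def Z_left[OF A B C] W_entry\<close>)
  also have "\<dots> = c * (if a = b \<and> a < n then 1 else 0)" by simp
  also have "(\<Sum>j<k. Z $$ (a,n+j) * W_mat n k c $$ (n+j,n+j) * Z $$ (b,n+j)) =
     - (\<Sum>j<k. Z $$ (a,n+j) * Z $$ (b,n+j))"
    by (simp add: W_entry sum_negf[symmetric])
  finally show ?thesis unfolding Z_def by simp
qed

lemma foldr_entry:
  assumes "\<forall>i\<in>set xs. F i \<in> carrier_mat d d"
  shows "foldr (\<lambda>i acc. F i + acc) xs (0\<^sub>m d d) \<in> carrier_mat d d \<and>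
    (\<forall>a b. a < d \<longrightarrow> b < d \<longrightarrow> foldr (\<lambda>i acc. F i + acc) xs (0\<^sub>m d d) $$ (a,b) = sum_list (map (\<lambda>i. F i $$ (a,b)) xs))"
  using assms by (induction xs) auto

lemma msum_entry:
  assumes "\<And>i. i < T \<Longrightarrow> F i \<in> carrier_mat d d"
  shows "msum d T F \<in> carrier_mat d d" and
    "a < d \<Longrightarrow> b < d \<Longrightarrow> msum d T F $$ (a,b) = (\<Sum>i<T. F i $$ (a,b))"
proof -
  have h: "\<forall>i\<in>set [0..<T]. F i \<in> carrier_mat d d" using assms by auto
  show "msum d T F \<in> carrier_mat d d" unfolding msum_def using foldr_entry[OF h] by blast
  assume "a < d" "b < d"
  then show "msum d T F $$ (a,b) = (\<Sum>i<T. F i $$ (a,b))" unfolding msum_def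
    using foldr_entry[OF h] by (simp add: sum_set_upt_conv_sum_list_nat[symmetric] lessThan_atLeast0)
qed

lemma Z_right: "A \<in> carrier_mat n k \<Longrightarrow> B \<in> carrier_mat n k \<Longrightarrow> C \<in> carrier_mat m k \<Longrightarrow>
   a < n+n+m+n \<Longrightarrow> j < k \<Longrightarrow> Z_mat n m k A B C $$ (a,n+j) =
   (if a < n then A $$ (a,j) else if a < n+n then - B $$ (a-n,j) else if a < n+n+m then - C $$ (a-n-n,j) else 0)"
  unfolding Z_mat_def by (auto simp: append_rows_def)


theorem proposition2:
  fixes n m T :: nat and \<epsilon> :: real
    and x u :: "nat \<Rightarrow> real vec"
  assumes "0 < n" and "0 < m" and "0 < T" and "\<epsilon> \<ge> 0"
    and "\<And>i. i \<le> T \<Longrightarrow> dim_vec (x i) = n"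
    and "\<And>i. i < T \<Longrightarrow> dim_vec (u i) = m"
    and E: "\<exists>P Y \<beta> \<alpha>. P \<in> carrier_mat n n \<and> P\<^sup>T = P \<and> Y \<in> carrier_mat m n \<and>
              \<alpha> \<ge> 0 \<and> \<beta> > 0 \<and> pd_mat P \<and>
              (let X1 = cols_mat n T (\<lambda>j. x (j + 1));
                   X0 = cols_mat n T x;
                   U0 = cols_mat m T u;
                   Z = Z_mat n m T X1 X0 U0
               in psd_mat (M_mat n m P Y \<beta> -
                    \<alpha> \<cdot>\<^sub>m (Z * W_mat n T (real T * \<epsilon>) * Z\<^sup>T)))"
  shows "\<exists>P Y \<beta> (\<tau> :: nat \<Rightarrow> real). P \<in> carrier_mat n n \<and> P\<^sup>T = P \<and> Y \<in> carrier_mat m n \<and>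
              \<beta> > 0 \<and> (\<forall>i < T. \<tau> i \<ge> 0) \<and> pd_mat P \<and>
              psd_mat (M_mat n m P Y \<beta> -
                 msum (n + n + m + n) T (\<lambda>i.
                   (let Zi = Z_mat n m 1 (mat_of_cols n [x (i + 1)])
                                     (mat_of_cols n [x i]) (mat_of_cols m [u i])
                    in \<tau> i \<cdot>\<^sub>m (Zi * W_mat n 1 \<epsilon> * Zi\<^sup>T))))"
proof -
  obtain P Y \<beta> \<alpha> where P: "P \<in> carrier_mat n n" "P\<^sup>T = P" and Y: "Y \<in> carrier_mat m n"
    and al: "\<alpha> \<ge> 0" and be: "\<beta> > 0" and pd: "pd_mat P"
    and ps: "psd_mat (M_mat n m P Y \<beta> - \<alpha> \<cdot>\<^sub>m (Z_mat n m T (cols_mat n T (\<lambda>j. x (j + 1))) (cols_mat n T x) (cols_mat m T u)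
          * W_mat n T (real T * \<epsilon>) * (Z_mat n m T (cols_mat n T (\<lambda>j. x (j + 1))) (cols_mat n T x) (cols_mat m T u))\<^sup>T))"
    using E unfolding Let_def by blast
  define X1 where "X1 = cols_mat n T (\<lambda>j. x (j + 1))"
  define X0 where "X0 = cols_mat n T x"
  define U0 where "U0 = cols_mat m T u"
  define Z where "Z = Z_mat n m T X1 X0 U0"
  define Zi where "Zi = (\<lambda>i. Z_mat n m 1 (mat_of_cols n [x (i + 1)]) (mat_of_cols n [x i]) (mat_of_cols m [u i]))"
  define F where "F = (\<lambda>i. \<alpha> \<cdot>\<^sub>m (Zi i * W_mat n 1 \<epsilon> * (Zi i)\<^sup>T))"
  have X1c: "X1 \<in> carrier_mat n T" and X0c: "X0 \<in> carrier_mat n T" and U0c: "U0 \<in> carrier_mat m T"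
    unfolding X1_def X0_def U0_def cols_mat_def by auto
  have Zc: "Z \<in> carrier_mat (n+n+m+n) (n+T)" unfolding Z_def by (rule Z_carrier[OF X1c X0c U0c])
  have Fc: "F i \<in> carrier_mat (n+n+m+n) (n+n+m+n)" for i
  proof -
    have "Zi i \<in> carrier_mat (n+n+m+n) (n+1)" unfolding Zi_def by (rule Z_carrier) auto
    then show ?thesis unfolding F_def using W_carrier[of n 1 \<epsilon>] by auto
  qed
  have eq: "msum (n + n + m + n) T F = \<alpha> \<cdot>\<^sub>m (Z * W_mat n T (real T * \<epsilon>) * Z\<^sup>T)"
  proof (rule eq_matI)
    fix a b assume a: "a < dim_row (\<alpha> \<cdot>\<^sub>m (Z * W_mat n T (real T * \<epsilon>) * Z\<^sup>T))"
      and b: "b < dim_col (\<alpha> \<cdot>\<^sub>m (Z * W_mat n T (real T * \<epsilon>) * Z\<^sup>T))"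
    have a': "a < n+n+m+n" and b': "b < n+n+m+n" using a b Zc by auto
    have zi: "Zi i $$ (c, n+0) = Z $$ (c, n+i)" if "i < T" "c < n+n+m+n" for i c
    proof -
      have "Zi i $$ (c, n+0) = (if c < n then x (i+1) $ c else if c < n+n then - x i $ (c-n) else if c < n+n+m then - u i $ (c-n-n) else 0)"
        unfolding Zi_def using that by (subst Z_right) (auto simp: mat_of_cols_index)
      moreover have "Z $$ (c, n+i) = (if c < n then x (i+1) $ c else if c < n+n then - x i $ (c-n) else if c < n+n+m then - u i $ (c-n-n) else 0)"
        unfolding Z_def using that by (subst Z_right[OF X1c X0c U0c]) (auto simp: X1_def X0_def U0_def cols_mat_def)
      ultimately show ?thesis by simp
    qed
    have "msum (n + n + m + n) T F $$ (a,b) = (\<Sum>i<T. F i $$ (a,b))"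
      by (rule msum_entry(2)[OF Fc a' b'])
    also have "\<dots> = (\<Sum>i<T. \<alpha> * (\<epsilon> * (if a = b \<and> a < n then 1 else 0) - Z $$ (a, n+i) * Z $$ (b, n+i)))"
    proof (rule sum.cong[OF refl])
      fix i assume "i \<in> {..<T}"
      then have i: "i < T" by simp
      have "F i $$ (a,b) = \<alpha> * (Zi i * W_mat n 1 \<epsilon> * (Zi i)\<^sup>T) $$ (a,b)"
        unfolding F_def using a' b' Fc[of i] unfolding F_def by auto
      also have "(Zi i * W_mat n 1 \<epsilon> * (Zi i)\<^sup>T) $$ (a,b) = \<epsilon> * (if a = b \<and> a < n then 1 else 0) -
          (\<Sum>j<1. Zi i $$ (a,n+j) * Zi i $$ (b,n+j))"
        unfolding Zi_def by (rule ZWZ_entry[OF _ _ _ a' b']) auto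
      finally show "F i $$ (a,b) = \<alpha> * (\<epsilon> * (if a = b \<and> a < n then 1 else 0) - Z $$ (a, n+i) * Z $$ (b, n+i))"
        using zi[OF i a'] zi[OF i b'] by simp
    qed
    also have "\<dots> = \<alpha> * (real T * \<epsilon> * (if a = b \<and> a < n then 1 else 0) - (\<Sum>j<T. Z $$ (a,n+j) * Z $$ (b,n+j)))"
      by (simp add: sum_distrib_left[symmetric] sum_subtractf algebra_simps)
    also have "\<dots> = \<alpha> * (Z * W_mat n T (real T * \<epsilon>) * Z\<^sup>T) $$ (a,b)"
      unfolding Z_def by (subst ZWZ_entry[OF X1c X0c U0c a' b']) simp
    also have "\<dots> = (\<alpha> \<cdot>\<^sub>m (Z * W_mat n T (real T * \<epsilon>) * Z\<^sup>T)) $$ (a,b)"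
      using a b by simp
    finally show "msum (n + n + m + n) T F $$ (a,b) = (\<alpha> \<cdot>\<^sub>m (Z * W_mat n T (real T * \<epsilon>) * Z\<^sup>T)) $$ (a,b)" .
  next
    show "dim_row (msum (n + n + m + n) T F) = dim_row (\<alpha> \<cdot>\<^sub>m (Z * W_mat n T (real T * \<epsilon>) * Z\<^sup>T))"
      using msum_entry(1)[of T F, OF Fc] Zc by auto
    show "dim_col (msum (n + n + m + n) T F) = dim_col (\<alpha> \<cdot>\<^sub>m (Z * W_mat n T (real T * \<epsilon>) * Z\<^sup>T))"
      using msum_entry(1)[of T F, OF Fc] Zc by auto
  qed
  have "psd_mat (M_mat n m P Y \<beta> - msum (n + n + m + n) T F)"
    using ps unfolding eq Z_def X1_def X0_def U0_def .
  then show ?thesis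
    using P Y be pd al unfolding F_def Zi_def Let_def
    by (intro exI[of _ P] exI[of _ Y] exI[of _ \<beta>] exI[of _ "\<lambda>_. \<alpha>"]) auto
qed

end
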